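(* Let $A\in\mathbb{R}^{n\times n}$ be stable and Metzler, $B\in\mathbb{R}^{n\times m}_{\ge 0}$, $C\in\mathbb{R}^{p\times n}_{\ge 0}$. Let $A_r^{(0)}$, $\epsilon$, $\gamma$ and the set $S:=S_{A_r}(A_r^{(0)},\epsilon,\gamma)$ be as described in the context, and let $f$ be as defined in the context. Then there exist positive constants $c_1$ and $c_2$ such that for all $(A_r)_1,(A_r)_2\in S$, $B_r\in\mathbb{R}^{r\times m}$ and $C_r\in\mathbb{R}^{p\times r}$, $$\|\nabla_{A_r}f((A_r)_1,B_r,C_r)-\nabla_{A_r}f((A_r)_2,B_r,C_r)\|_{\rm F}\le L_{A_r}(B_r,C_r)\,\|(A_r)_1-(A_r)_2\|_{\rm F},$$ where $L_{A_r}(B_r,C_r):=(c_1+c_2\|B_r\|_{\rm F}\|C_r\|_{\rm F})\|B_r\|_{\rm F}\|C_r\|_{\rm F}$.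
   Context: Setting: $\mathcal{C}_1,\dots,\mathcal{C}_r$ is a partition of $\{1,\dots,n\}$ into nonempty sets, $\Pi\in\mathbb{R}^{n\times r}$ with $\Pi_{ij}=1$ if $i\in\mathcal{C}_j$ and $0$ otherwise, $\alpha\ge0$, and $A_r^{(0)}:=(\Pi^\top\Pi)^{-1}\Pi^\top A\Pi-\alpha I_r$ is assumed stable (all eigenvalues with negative real part) and irreducible (the directed graph with edge $i\to j$ when $i\ne j$, $(A_r^{(0)})_{ij}\ne0$ is strongly connected). Let $\mu_1<0$ be the real eigenvalue of $A_r^{(0)}$ whose real part strictly exceeds that of all other eigenvalues, with positive right/left eigenvectors $v_1,w_1$, $w_1^\top v_1=1$. For $\epsilon>0$ with $\mu_1+\epsilon\le0$ put $\bar A_r:=A_r^{(0)}-(\mu_1+\epsilon)v_1w_1^\top$, and for $\gamma>0$ with $-\gamma I_r\le A_r^{(0)}$ (entrywise) put $S_{A_r}(A_r^{(0)},\epsilon,\gamma):=\{A_r\in\mathbb{R}^{r\times r}: -\gamma I_r\le A_r\le\bar A_r\}$ (entrywise); all its elements are stable. For stable $A_r$, define $f(A_r,B_r,C_r):=\tfrac12{\rm tr}(C_rPC_r^\top-2C_rX^\top C^\top)$, where $X\in\mathbb{R}^{n\times r}$ and $P\in\mathbb{R}^{r\times r}$ are the unique solutions of $AX+XA_r^\top+BB_r^\top=0$ and $A_rP+PA_r^\top+B_rB_r^\top=0$. $\nabla_{A_r}f$ is the partial gradient with respect to $A_r$ for the Frobenius inner product; $\|\cdot\|_{\rm F}$ is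 the Frobenius norm. *)

theory Defs
  imports "HOL-Analysis.Analysis"
begin

text \<open>Matrices are rendered as \<open>real^'c^'r\<close> (rows indexed by \<open>'r\<close>, columns by \<open>'c\<close>).
  The Euclidean norm/inner product on \<open>real^'c^'r\<close> is the Frobenius norm/inner product.\<close>

definition cmat :: "real^'c^'r \<Rightarrow> complex^'c^'r" where
  "cmat M = (\<chi> i j. complex_of_real (M$i$j))"

definition is_eigenvalue :: "real^'n^'n \<Rightarrow> complex \<Rightarrow> bool" where
  "is_eigenvalue M lam \<longleftrightarrow> (\<exists>v::complex^'n. v \<noteq> 0 \<and> cmat M *v v = lam *s v)"

definition stable :: "real^'n^'n \<Rightarrow> bool" where
  "stable M \<longleftrightarrow> (\<forall>lam. is_eigenvalue M lam \<longrightarrow> Re lam < 0)"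

definition metzler :: "real^'n^'n \<Rightarrow> bool" where
  "metzler M \<longleftrightarrow> (\<forall>i j. i \<noteq> j \<longrightarrow> M$i$j \<ge> 0)"

definition irreducible_mat :: "real^'n^'n \<Rightarrow> bool" where
  "irreducible_mat M \<longleftrightarrow>
     (\<forall>i j. i \<noteq> j \<longrightarrow> (i, j) \<in> {(k, l). k \<noteq> l \<and> M$k$l \<noteq> 0}\<^sup>+)"

definition part_mat :: "('n \<Rightarrow> 'r) \<Rightarrow> real^'r^'n" where
  "part_mat cl = (\<chi> i j. if cl i = j then 1 else 0)"

definition mtrace :: "real^'n^'n \<Rightarrow> real" where
  "mtrace M = (\<Sum>i\<in>UNIV. M$i$i)"

definition Xsol :: "real^'n^'n \<Rightarrow> real^'m^'n \<Rightarrow> real^'r^'r \<Rightarrow> real^'m^'r \<Rightarrow> real^'r^'n" where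
  "Xsol A B Ar Br = (THE X. A ** X + X ** transpose Ar + B ** transpose Br = 0)"

definition Psol :: "real^'r^'r \<Rightarrow> real^'m^'r \<Rightarrow> real^'r^'r" where
  "Psol Ar Br = (THE P. Ar ** P + P ** transpose Ar + Br ** transpose Br = 0)"

definition fobj :: "real^'n^'n \<Rightarrow> real^'m^'n \<Rightarrow> real^'n^'p
    \<Rightarrow> real^'r^'r \<Rightarrow> real^'m^'r \<Rightarrow> real^'r^'p \<Rightarrow> real" where
  "fobj A B C Ar Br Cr =
     (1/2) * mtrace (Cr ** Psol Ar Br ** transpose Cr
                     - 2 *\<^sub>R (Cr ** transpose (Xsol A B Ar Br) ** transpose C))"

definition grad_Ar :: "real^'n^'n \<Rightarrow> real^'m^'n \<Rightarrow> real^'n^'p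
    \<Rightarrow> real^'r^'r \<Rightarrow> real^'m^'r \<Rightarrow> real^'r^'p \<Rightarrow> real^'r^'r" where
  "grad_Ar A B C Ar Br Cr =
     (THE G. ((\<lambda>X. fobj A B C X Br Cr) has_derivative (\<lambda>H. G \<bullet> H)) (at Ar))"

end

theory Submission
  imports Defs
begin

lemma vec_sq: fixes v :: "real^'c::finite"
  shows "(norm v)^2 = (\<Sum>j\<in>UNIV. (v$j)^2)"
  unfolding power2_norm_eq_inner inner_vec_def by (simp add: power2_eq_square)

lemma frob_sq: fixes X :: "real^'c::finite^'r::finite"
  shows "(norm X)^2 = (\<Sum>i\<in>UNIV. \<Sum>j\<in>UNIV. (X$i$j)^2)"
proof -
  have "(norm X)^2 = (\<Sum>i\<in>UNIV. (norm (X$i))^2)"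
    unfolding power2_norm_eq_inner inner_vec_def by simp
  then show ?thesis by (simp add: vec_sq)
qed

lemma norm_transpose: fixes X :: "real^'c::finite^'r::finite"
  shows "norm (transpose X) = norm X"
proof -
  have "(norm (transpose X))^2 = (norm X)^2"
    unfolding frob_sq transpose_def by simp (rule sum.swap)
  then show ?thesis by (simp add: power2_eq_iff_nonneg)
qed

lemma entry_le_norm: fixes X :: "real^'c::finite^'r::finite"
  shows "\<bar>X$i$j\<bar> \<le> norm X"
  proof -
  have "\<bar>X$i$j\<bar> \<le> norm (X$i)" by (rule component_le_norm_cart)
  also have "\<dots> \<le> norm X" by (rule Finite_Cartesian_Product.norm_nth_le)
  finally show ?thesis .
qed

lemma norm_le_entries: fixes X :: "real^'c::finite^'r::finite"
  shows "norm X \<le> (\<Sum>i\<in>UNIV. \<Sum>j\<in>UNIV. \<bar>X$i$j\<bar>)"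
proof -
  have "norm X \<le> (\<Sum>i\<in>UNIV. \<bar>norm (X$i)\<bar>)"
    using norm_le_l1_cart[of "\<chi> i. norm (X$i)"]
    by (simp add: norm_vec_def L2_set_def)
  also have "\<dots> \<le> (\<Sum>i\<in>UNIV. \<Sum>j\<in>UNIV. \<bar>X$i$j\<bar>)"
    by (intro sum_mono) (simp add: norm_le_l1_cart)
  finally show ?thesis .
qed

lemma norm_mmult: fixes X :: "real^'k::finite^'r::finite" and Y :: "real^'c::finite^'k"
  shows "norm (X ** Y) \<le> norm X * norm Y"
proof -
  have e: "(X ** Y)$i$j = X$i \<bullet> (\<chi> k. Y$k$j)" for i j
    by (simp add: matrix_matrix_mult_def inner_vec_def)
  have a: "((X ** Y)$i$j)^2 \<le> (norm (X$i))^2 * (norm (\<chi> k. Y$k$j))^2" for i j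
  proof -
    have "\<bar>(X ** Y)$i$j\<bar> \<le> norm (X$i) * norm (\<chi> k. Y$k$j)" unfolding e by (rule Cauchy_Schwarz_ineq2)
    then have "\<bar>(X ** Y)$i$j\<bar>^2 \<le> (norm (X$i) * norm (\<chi> k. Y$k$j))^2"
      by (intro power_mono) auto
    then show ?thesis by (simp add: power_mult_distrib)
  qed
  have "(norm (X ** Y))^2 \<le> (\<Sum>i\<in>UNIV. \<Sum>j\<in>UNIV. (norm (X$i))^2 * (norm (\<chi> k. Y$k$j))^2)"
    unfolding frob_sq[of "X ** Y"] by (intro sum_mono a)
  also have "\<dots> = (\<Sum>i\<in>UNIV. (norm (X$i))^2) * (\<Sum>j\<in>UNIV. (norm (\<chi> k. Y$k$j))^2)"
    by (simp add: sum_product)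
  also have "(\<Sum>i\<in>UNIV. (norm (X$i))^2) = (norm X)^2"
    by (simp add: frob_sq vec_sq)
  also have "(\<Sum>j\<in>UNIV. (norm (\<chi> k. Y$k$j))^2) = (norm Y)^2"
    unfolding frob_sq[of Y] vec_sq by simp (rule sum.swap)
  finally have "(norm (X ** Y))^2 \<le> (norm X * norm Y)^2" by (simp add: power_mult_distrib)
  then show ?thesis by (rule power2_le_imp_le) simp
qed

lemma mtrace_bound: fixes W :: "real^'p::finite^'p"
  shows "\<bar>mtrace W\<bar> \<le> real CARD('p) * norm W"
proof -
  have "\<bar>mtrace W\<bar> \<le> (\<Sum>i\<in>UNIV. \<bar>W$i$i\<bar>)" unfolding mtrace_def by (rule sum_abs)
  also have "\<dots> \<le> (\<Sum>i\<in>(UNIV::'p set). norm W)" by (intro sum_mono entry_le_norm)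
  finally show ?thesis by simp
qed

lemma mtrace_diff: "mtrace (X - Y) = mtrace X - mtrace Y"
  by (simp add: mtrace_def sum_subtractf)
lemma mtrace_scale: "mtrace (c *\<^sub>R X) = c * mtrace X"
  by (simp add: mtrace_def sum_distrib_left)

lemma mm_add_l: "((A::real^'k::finite^'r::finite) + B) ** (C::real^'c::finite^'k) = A ** C + B ** C"
  by (simp add: matrix_matrix_mult_def vec_eq_iff sum.distrib algebra_simps)
lemma mm_add_r: "(C::real^'k::finite^'r::finite) ** ((A::real^'c::finite^'k) + B) = C ** A + C ** B"
  by (simp add: matrix_matrix_mult_def vec_eq_iff sum.distrib algebra_simps)
lemma mm_diff_l: "((A::real^'k::finite^'r::finite) - B) ** (C::real^'c::finite^'k) = A ** C - B ** C"
  by (simp add: matrix_matrix_mult_def vec_eq_iff sum_subtractf algebra_simps)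
lemma mm_diff_r: "(C::real^'k::finite^'r::finite) ** ((A::real^'c::finite^'k) - B) = C ** A - C ** B"
  by (simp add: matrix_matrix_mult_def vec_eq_iff sum_subtractf algebra_simps)
lemma mm_scale_l: "((c::real) *\<^sub>R (A::real^'k::finite^'r::finite)) ** (C::real^'c::finite^'k) = c *\<^sub>R (A ** C)"
  by (simp add: matrix_matrix_mult_def vec_eq_iff sum_distrib_left algebra_simps)
lemma mm_scale_r: "(C::real^'k::finite^'r::finite) ** ((c::real) *\<^sub>R (A::real^'c::finite^'k)) = c *\<^sub>R (C ** A)"
  by (simp add: matrix_matrix_mult_def vec_eq_iff sum_distrib_left algebra_simps)
lemma mm_zero_l: "(0::real^'k::finite^'r::finite) ** (C::real^'c::finite^'k) = 0"
  by (simp add: matrix_matrix_mult_def vec_eq_iff)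
lemma tr_add: "transpose ((A::real^'c::finite^'r::finite) + B) = transpose A + transpose B"
  by (simp add: transpose_def vec_eq_iff)
lemma tr_diff: "transpose ((A::real^'c::finite^'r::finite) - B) = transpose A - transpose B"
  by (simp add: transpose_def vec_eq_iff)
lemma tr_zero: "transpose (0::real^'c::finite^'r::finite) = 0"
  by (simp add: transpose_def vec_eq_iff)

lemmas mm_simps = mm_add_l mm_add_r mm_diff_l mm_diff_r mm_scale_l mm_scale_r mm_zero_l times0_right
  tr_add tr_diff tr_zero transpose_scalar


definition syl :: "real^'k::finite^'k \<Rightarrow> real^'r::finite^'r \<Rightarrow> real^'r^'k \<Rightarrow> real^'r^'k" where
  "syl A1 M X = A1 ** X + X ** transpose M"

definition coer :: "real^'k::finite^'k \<Rightarrow> real^'r::finite^'r \<Rightarrow> real \<Rightarrow> bool" where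
  "coer A1 M K \<longleftrightarrow> (\<forall>X::real^'r^'k. norm X \<le> K * norm (syl A1 M X))"

definition sol :: "real^'k::finite^'k \<Rightarrow> real^'r::finite^'r \<Rightarrow> real^'r^'k \<Rightarrow> real^'r^'k" where
  "sol A1 M R = (THE X. A1 ** X + X ** transpose M + R = 0)"

lemma syl_add: "syl A1 M (X + Y) = syl A1 M X + syl A1 M Y"
  by (simp add: syl_def mm_simps algebra_simps)
lemma syl_diff: "syl A1 M (X - Y) = syl A1 M X - syl A1 M Y"
  by (simp add: syl_def mm_simps algebra_simps)
lemma syl_scale: "syl A1 M (c *\<^sub>R X) = c *\<^sub>R syl A1 M X"
  by (simp add: syl_def mm_simps algebra_simps)
lemma syl_linear: "linear (syl A1 M)"
  by (rule linearI) (simp_all add: syl_add syl_scale)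
lemma syl_pert: "syl A1' M' X = syl A1 M X + ((A1' - A1) ** X + X ** transpose (M' - M))"
  by (simp add: syl_def mm_simps algebra_simps)

lemma nrm2: fixes D1 :: "real^'k::finite^'k" and Z :: "real^'r::finite^'k" and D2 :: "real^'r^'r"
  shows "norm (D1 ** Z + Z ** transpose D2) \<le> (norm D1 + norm D2) * norm Z"
proof -
  have "norm (D1 ** Z + Z ** transpose D2) \<le> norm (D1 ** Z) + norm (Z ** transpose D2)"
    by (rule norm_triangle_ineq)
  also have "\<dots> \<le> norm D1 * norm Z + norm Z * norm D2"
    using norm_mmult[of D1 Z] norm_mmult[of Z "transpose D2"] by (simp add: norm_transpose)
  finally show ?thesis by (simp add: algebra_simps)
qed

lemma coer_exists: assumes "coer A1 M K" shows "\<exists>X. syl A1 M X = R"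
proof -
  have inj: "inj (syl A1 M)"
  proof (rule linear_injective_0[OF syl_linear, THEN iffD2], intro allI impI)
    fix X assume z: "syl A1 M X = 0"
    have "norm X \<le> K * norm (syl A1 M X)" using assms unfolding coer_def by blast
    then show "X = 0" using z by simp
  qed
  have "surj (syl A1 M)" by (rule linear_injective_imp_surjective[OF syl_linear inj]) simp
  then show ?thesis by (metis surjD)
qed

lemma coer_unique: assumes "coer A1 M K" "syl A1 M Y = - R" shows "sol A1 M R = Y"
  unfolding sol_def
proof (rule the_equality)
  show "A1 ** Y + Y ** transpose M + R = 0" using assms(2) by (simp add: syl_def)
  fix X assume "A1 ** X + X ** transpose M + R = 0"
  then have "syl A1 M X = - R" by (simp add: syl_def eq_neg_iff_add_eq_0)
  then have "syl A1 M (X - Y) = 0" using assms(2) by (simp add: syl_diff)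
  moreover have "norm (X - Y) \<le> K * norm (syl A1 M (X - Y))" using assms(1) unfolding coer_def by blast
  ultimately show "X = Y" by simp
qed

lemma coer_sol: assumes "coer A1 M K" shows "syl A1 M (sol A1 M R) = - R"
proof -
  obtain X where X: "syl A1 M X = - R" using coer_exists[OF assms] by blast
  then show ?thesis using coer_unique[OF assms X] by simp
qed

lemma coer_bound: assumes "coer A1 M K" shows "norm (sol A1 M R) \<le> K * norm R"
proof -
  have "norm (sol A1 M R) \<le> K * norm (syl A1 M (sol A1 M R))" using assms unfolding coer_def by blast
  then show ?thesis using coer_sol[OF assms, of R] by simp
qed

lemma coer_app: assumes "coer A1 M K" "syl A1 M X = - W" shows "norm X \<le> K * norm W"
proof -
  have "norm X \<le> K * norm (syl A1 M X)" using assms unfolding coer_def by blast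
  then show ?thesis using assms(2) by simp
qed

lemma coer_nonneg: assumes "coer (A1::real^'k::finite^'k) (M::real^'r::finite^'r) K" shows "0 \<le> K"
proof -
  let ?X = "(\<chi> i j. 1) :: real^'r^'k"
  have "?X $ undefined $ undefined = 1" by simp
  then have "?X \<noteq> 0" by (metis zero_index zero_neq_one)
  then have "0 < norm ?X" by simp
  also have "\<dots> \<le> K * norm (syl A1 M ?X)" using assms unfolding coer_def by blast
  finally show ?thesis by (simp add: zero_less_mult_iff)
qed

lemma sol_linear: assumes "coer A1 M K" shows "linear (sol A1 M)"
proof (rule linearI)
  fix R1 R2
  show "sol A1 M (R1 + R2) = sol A1 M R1 + sol A1 M R2"
    by (rule coer_unique[OF assms]) (simp add: syl_add coer_sol[OF assms])
next
  fix c :: real and R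
  show "sol A1 M (c *\<^sub>R R) = c *\<^sub>R sol A1 M R"
    by (rule coer_unique[OF assms]) (simp add: syl_scale coer_sol[OF assms])
qed

lemma coer_mono: "coer A1 M K \<Longrightarrow> K \<le> K' \<Longrightarrow> coer A1 M K'"
  unfolding coer_def by (meson mult_right_mono norm_ge_zero order_trans)

lemma coer_pert: assumes "coer A1 M K" "2 * K * (norm (A1' - A1) + norm (M' - M)) \<le> 1"
  shows "coer A1' M' (2 * K)"
  unfolding coer_def
proof
  fix X
  have K0: "0 \<le> K" by (rule coer_nonneg[OF assms(1)])
  let ?D = "(A1' - A1) ** X + X ** transpose (M' - M)"
  have "syl A1 M X = syl A1' M' X - ?D" using syl_pert[of A1' M' X A1 M] by simp
  then have n1: "norm (syl A1 M X) \<le> norm (syl A1' M' X) + norm ?D" by (metis norm_triangle_ineq4)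
  have n2: "norm ?D \<le> (norm (A1' - A1) + norm (M' - M)) * norm X" by (rule nrm2)
  from n1 n2 have "norm (syl A1 M X) \<le> norm (syl A1' M' X) + (norm (A1' - A1) + norm (M' - M)) * norm X"
    by linarith
  then have "K * norm (syl A1 M X) \<le> K * (norm (syl A1' M' X) + (norm (A1' - A1) + norm (M' - M)) * norm X)"
    using K0 by (rule mult_left_mono)
  then have h1: "K * norm (syl A1 M X) \<le> K * norm (syl A1' M' X) + K * ((norm (A1' - A1) + norm (M' - M)) * norm X)"
    by (simp only: distrib_left)
  have h2: "norm X \<le> K * norm (syl A1 M X)" using assms(1) unfolding coer_def by blast
  have "2 * K * (norm (A1' - A1) + norm (M' - M)) * norm X \<le> 1 * norm X"
    by (rule mult_right_mono[OF assms(2) norm_ge_zero])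
  then have h3: "2 * (K * ((norm (A1' - A1) + norm (M' - M)) * norm X)) \<le> norm X"
    by (simp only: mult.assoc mult_1)
  from h1 h2 h3 have "norm X \<le> 2 * (K * norm (syl A1' M' X))" by linarith
  then show "norm X \<le> 2 * K * norm (syl A1' M' X)" by (simp only: mult.assoc)
qed

lemma alg1: fixes D1 :: "real^'k::finite^'k" and Z Z' :: "real^'r::finite^'k" and D2 :: "real^'r^'r"
  shows "(D1 ** Z' + Z' ** transpose D2) - (D1 ** Z + Z ** transpose D2) = D1 ** (Z' - Z) + (Z' - Z) ** transpose D2"
  by (simp add: mm_simps algebra_simps)

lemma syl_back: "syl A1' M' X = W \<Longrightarrow> syl A1 M X = W - ((A1' - A1) ** X + X ** transpose (M' - M))"
  using syl_pert[of A1' M' X A1 M] by (simp add: algebra_simps)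

lemma sol_diff_bound:
  assumes "coer A1 M K" "coer A1' M' K'"
  shows "norm (sol A1' M' R - sol A1 M R) \<le> K * ((norm (A1' - A1) + norm (M' - M)) * norm (sol A1' M' R))"
proof -
  let ?Z = "sol A1 M R" and ?Z' = "sol A1' M' R"
  have "syl A1 M (?Z' - ?Z) = syl A1 M ?Z' - syl A1 M ?Z" by (simp only: syl_diff)
  also have "\<dots> = (- R - ((A1' - A1) ** ?Z' + ?Z' ** transpose (M' - M))) - (- R)"
    by (simp only: syl_back[OF coer_sol[OF assms(2)]] coer_sol[OF assms(1)])
  also have "\<dots> = - ((A1' - A1) ** ?Z' + ?Z' ** transpose (M' - M))" by simp
  finally have "norm (?Z' - ?Z) \<le> K * norm ((A1' - A1) ** ?Z' + ?Z' ** transpose (M' - M))"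
    by (rule coer_app[OF assms(1)])
  also have "\<dots> \<le> K * ((norm (A1' - A1) + norm (M' - M)) * norm ?Z')"
    by (rule mult_left_mono[OF nrm2 coer_nonneg[OF assms(1)]])
  finally show ?thesis .
qed

lemma sol_rem:
  assumes "coer A1 M K" "coer A1' M' K'"
  shows "norm (sol A1' M' R - sol A1 M R - sol A1 M ((A1' - A1) ** sol A1 M R + sol A1 M R ** transpose (M' - M)))
    \<le> K * ((norm (A1' - A1) + norm (M' - M)) * norm (sol A1' M' R - sol A1 M R))"
proof -
  let ?Z = "sol A1 M R" and ?Z' = "sol A1' M' R"
  let ?Q = "(A1' - A1) ** ?Z + ?Z ** transpose (M' - M)"
  let ?Q' = "(A1' - A1) ** ?Z' + ?Z' ** transpose (M' - M)"
  let ?Zd = "sol A1 M ?Q"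
  have "syl A1 M (?Z' - ?Z - ?Zd) = syl A1 M ?Z' - syl A1 M ?Z - syl A1 M ?Zd" by (simp only: syl_diff)
  also have "\<dots> = (- R - ?Q') - (- R) - (- ?Q)"
    by (simp only: syl_back[OF coer_sol[OF assms(2)]] coer_sol[OF assms(1)])
  also have "\<dots> = - (?Q' - ?Q)" by (simp add: algebra_simps)
  also have "\<dots> = - ((A1' - A1) ** (?Z' - ?Z) + (?Z' - ?Z) ** transpose (M' - M))" by (simp only: alg1)
  finally have "norm (?Z' - ?Z - ?Zd) \<le> K * norm ((A1' - A1) ** (?Z' - ?Z) + (?Z' - ?Z) ** transpose (M' - M))"
    by (rule coer_app[OF assms(1)])
  also have "\<dots> \<le> K * ((norm (A1' - A1) + norm (M' - M)) * norm (?Z' - ?Z))"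
    by (rule mult_left_mono[OF nrm2 coer_nonneg[OF assms(1)]])
  finally show ?thesis .
qed

lemma sol_fo_diff:
  assumes "coer A1 M K" "coer A1' M' K"
  shows "norm (sol A1' M' (E1 ** sol A1' M' R + sol A1' M' R ** transpose E2)
             - sol A1 M (E1 ** sol A1 M R + sol A1 M R ** transpose E2))
    \<le> K * ((norm E1 + norm E2) * norm (sol A1' M' R - sol A1 M R)
          + (norm (A1' - A1) + norm (M' - M)) * norm (sol A1 M (E1 ** sol A1 M R + sol A1 M R ** transpose E2)))"
proof -
  let ?Z = "sol A1 M R" and ?Z' = "sol A1' M' R"
  let ?Q = "E1 ** ?Z + ?Z ** transpose E2"
  let ?Q' = "E1 ** ?Z' + ?Z' ** transpose E2"
  let ?W = "sol A1 M ?Q"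
  let ?W' = "sol A1' M' ?Q'"
  let ?P = "(A1' - A1) ** ?W + ?W ** transpose (M' - M)"
  have sW: "syl A1' M' ?W = - ?Q + ?P"
    using syl_pert[of A1' M' ?W A1 M] coer_sol[OF assms(1), of ?Q] by simp
  have "syl A1' M' (?W' - ?W) = syl A1' M' ?W' - syl A1' M' ?W" by (simp only: syl_diff)
  also have "\<dots> = - ?Q' - (- ?Q + ?P)" by (simp only: sW coer_sol[OF assms(2)])
  also have "\<dots> = - ((?Q' - ?Q) + ?P)" by (simp add: algebra_simps)
  also have "\<dots> = - ((E1 ** (?Z' - ?Z) + (?Z' - ?Z) ** transpose E2) + ?P)" by (simp only: alg1)
  finally have "norm (?W' - ?W) \<le> K * norm ((E1 ** (?Z' - ?Z) + (?Z' - ?Z) ** transpose E2) + ?P)"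
    by (rule coer_app[OF assms(2)])
  also have "\<dots> \<le> K * ((norm E1 + norm E2) * norm (?Z' - ?Z) + (norm (A1' - A1) + norm (M' - M)) * norm ?W)"
    by (rule mult_left_mono[OF _ coer_nonneg[OF assms(1)]])
       (rule order_trans[OF norm_triangle_ineq add_mono[OF nrm2 nrm2]])
  finally show ?thesis .
qed


lemma sum_split_at: fixes f :: "'k::finite \<Rightarrow> real"
  shows "(\<Sum>k\<in>UNIV. f k) = f i + (\<Sum>k\<in>UNIV - {i}. f k)"
  by (subst sum.remove[of UNIV i]) auto

lemma offdiag_bound:
  fixes A1 :: "real^'k::finite^'k" and X :: "real^'r::finite^'k" and x :: "real^'k"
  assumes mA: "\<forall>i j. i \<noteq> j \<longrightarrow> 0 \<le> A1$i$j"
    and bnd: "\<And>k. \<bar>X$k$j\<bar> \<le> t * (x$k * c)" and t0: "0 \<le> t" and c0: "0 \<le> c"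
    and Ax: "(A1 *v x)$i \<le> - a * x$i" and xpos: "\<forall>k. 0 < x$k"
  shows "\<bar>\<Sum>k\<in>UNIV - {i}. A1$i$k * X$k$j\<bar> \<le> (- a - A1$i$i) * (t * (x$i * c))"
    and "A1$i$i \<le> - a"
proof -
  let ?S = "\<Sum>k\<in>UNIV - {i}. A1$i$k * x$k"
  have Axs: "(A1 *v x)$i = A1$i$i * x$i + ?S"
    unfolding matrix_vector_mult_def by (simp add: sum_split_at[of _ i])
  have S0: "0 \<le> ?S" proof (intro sum_nonneg mult_nonneg_nonneg)
    fix k assume "k \<in> UNIV - {i}" then show "0 \<le> A1$i$k" using mA by auto
  next
    fix k show "0 \<le> x$k" using xpos[rule_format, of k] by simp
  qed
  have "A1$i$i * x$i \<le> - a * x$i" using Axs Ax S0 by linarith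
  then show aii: "A1$i$i \<le> - a" using xpos by (meson mult_right_le_imp_le)
  have "\<bar>\<Sum>k\<in>UNIV - {i}. A1$i$k * X$k$j\<bar> \<le> (\<Sum>k\<in>UNIV - {i}. \<bar>A1$i$k * X$k$j\<bar>)" by (rule sum_abs)
  also have "\<dots> \<le> (\<Sum>k\<in>UNIV - {i}. A1$i$k * (t * (x$k * c)))"
  proof (rule sum_mono)
    fix k assume "k \<in> UNIV - {i}"
    then have "0 \<le> A1$i$k" using mA by auto
    then show "\<bar>A1$i$k * X$k$j\<bar> \<le> A1$i$k * (t * (x$k * c))"
      using bnd[of k] by (simp add: abs_mult mult_left_mono)
  qed
  also have "\<dots> = (t * c) * ?S" by (simp add: sum_distrib_left algebra_simps)
  also have "\<dots> \<le> (t * c) * (- a * x$i - A1$i$i * x$i)"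
    using Axs Ax t0 c0 by (intro mult_left_mono) auto
  also have "\<dots> = (- a - A1$i$i) * (t * (x$i * c))" by (simp add: algebra_simps)
  finally show "\<bar>\<Sum>k\<in>UNIV - {i}. A1$i$k * X$k$j\<bar> \<le> (- a - A1$i$i) * (t * (x$i * c))" .
qed

lemma coer_metzler:
  fixes A1 :: "real^'k::finite^'k" and M :: "real^'r::finite^'r" and x :: "real^'k" and v :: "real^'r"
  assumes mA: "\<forall>i j. i \<noteq> j \<longrightarrow> 0 \<le> A1$i$j" and mM: "\<forall>i j. i \<noteq> j \<longrightarrow> 0 \<le> M$i$j"
    and xlo: "\<forall>i. xmin \<le> x$i" and xhi: "\<forall>i. x$i \<le> xmax" and xmin: "0 < xmin"
    and vlo: "\<forall>i. vmin \<le> v$i" and vhi: "\<forall>i. v$i \<le> vmax" and vmin: "0 < vmin"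
    and Ax: "\<forall>i. (A1 *v x)$i \<le> - a * x$i" and Mv: "\<forall>i. (M *v v)$i \<le> - b * v$i"
    and ab: "0 < a + b"
  shows "coer A1 M (real CARD('k) * real CARD('r) * (xmax * vmax) / ((a + b) * (xmin * vmin)))"
  unfolding coer_def
proof
  fix X :: "real^'r^'k"
  define Y where "Y = syl A1 M X"
  have xpos: "\<forall>k. 0 < x$k" using xlo xmin by (meson less_le_trans)
  have vpos: "\<forall>k. 0 < v$k" using vlo vmin by (meson less_le_trans)
  define g where "g = (\<lambda>p::'k\<times>'r. \<bar>X$fst p$snd p\<bar> / (x$fst p * v$snd p))"
  define t where "t = Max (range g)"
  have "t \<in> range g" unfolding t_def by (rule Max_in) auto
  then obtain i j where tij: "t = g (i, j)" by auto
  have bnd: "\<bar>X$k$l\<bar> \<le> t * (x$k * v$l)" for k l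
  proof -
    have "g (k, l) \<le> t" unfolding t_def by (rule Max_ge) auto
    then show ?thesis using xpos vpos by (simp add: g_def pos_divide_le_eq)
  qed
  have Xij: "\<bar>X$i$j\<bar> = t * (x$i * v$j)" using tij xpos vpos
    by (simp add: g_def) (metis mult.commute nonzero_eq_divide_eq order_less_irrefl mult_pos_pos)
  have t0: "0 \<le> t" using tij by (simp add: g_def xpos vpos less_imp_le)
  have Yij: "Y$i$j = (A1$i$i + M$j$j) * X$i$j + (\<Sum>k\<in>UNIV - {i}. A1$i$k * X$k$j) + (\<Sum>l\<in>UNIV - {j}. M$j$l * X$i$l)"
    unfolding Y_def syl_def matrix_matrix_mult_def transpose_def
    by (simp add: sum_split_at[of _ i] sum_split_at[of _ j] algebra_simps)
  have r1: "\<bar>\<Sum>k\<in>UNIV - {i}. A1$i$k * X$k$j\<bar> \<le> (- a - A1$i$i) * (t * (x$i * v$j))"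
    and a1: "A1$i$i \<le> - a"
    using offdiag_bound[of A1 X j t x "v$j" i a] mA bnd t0 vpos Ax xpos by (auto simp: less_imp_le)
  have bnd2: "\<bar>(transpose X)$l$i\<bar> \<le> t * (v$l * x$i)" for l
    using bnd[of i l] by (simp add: transpose_def mult.commute)
  have r2': "\<bar>\<Sum>l\<in>UNIV - {j}. M$j$l * (transpose X)$l$i\<bar> \<le> (- b - M$j$j) * (t * (v$j * x$i))"
    and m1: "M$j$j \<le> - b"
    using offdiag_bound[of M "transpose X" i t v "x$i" j b] mM bnd2 t0 xpos Mv vpos by (auto simp: less_imp_le)
  have r2: "\<bar>\<Sum>l\<in>UNIV - {j}. M$j$l * X$i$l\<bar> \<le> (- b - M$j$j) * (t * (x$i * v$j))"
    using r2' by (simp add: transpose_def mult.commute)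
  have dX: "\<bar>(A1$i$i + M$j$j) * X$i$j\<bar> = - (A1$i$i + M$j$j) * (t * (x$i * v$j))"
    using a1 m1 ab Xij by (simp add: abs_mult)
  have "\<bar>(A1$i$i + M$j$j) * X$i$j\<bar> \<le> \<bar>Y$i$j\<bar> + \<bar>\<Sum>k\<in>UNIV - {i}. A1$i$k * X$k$j\<bar> + \<bar>\<Sum>l\<in>UNIV - {j}. M$j$l * X$i$l\<bar>"
    unfolding Yij by linarith
  then have key: "(a + b) * (t * (x$i * v$j)) \<le> \<bar>Y$i$j\<bar>"
    using dX r1 r2 by (simp add: algebra_simps)
  have "(a + b) * (t * (xmin * vmin)) \<le> (a + b) * (t * (x$i * v$j))"
    using ab t0 xlo vlo xmin vmin xpos vpos by (intro mult_left_mono mult_mono) (auto simp: less_imp_le)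
  also have "\<dots> \<le> norm Y" using key entry_le_norm[of Y i j] by linarith
  finally have tb: "t * ((a + b) * (xmin * vmin)) \<le> norm Y" by (simp add: algebra_simps)
  have pos: "0 < (a + b) * (xmin * vmin)" using ab xmin vmin by simp
  have tY: "t \<le> norm Y / ((a + b) * (xmin * vmin))" using tb pos by (simp add: pos_le_divide_eq)
  have "norm X \<le> (\<Sum>k\<in>UNIV. \<Sum>l\<in>UNIV. \<bar>X$k$l\<bar>)" by (rule norm_le_entries)
  also have "\<dots> \<le> (\<Sum>k\<in>(UNIV::'k set). \<Sum>l\<in>(UNIV::'r set). t * (xmax * vmax))"
  proof (intro sum_mono)
    fix k l
    have x0: "0 \<le> x$k" "0 \<le> v$l" using xpos vpos by (auto simp: less_imp_le)
    have "x$k * v$l \<le> xmax * vmax"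
      using xhi vhi x0 by (intro mult_mono) (auto intro: order_trans)
    then have "t * (x$k * v$l) \<le> t * (xmax * vmax)"
      using t0 by (rule mult_left_mono)
    then show "\<bar>X$k$l\<bar> \<le> t * (xmax * vmax)" using bnd[of k l] by linarith
  qed
  also have "\<dots> = real CARD('k) * real CARD('r) * (xmax * vmax) * t" by simp
  also have "\<dots> \<le> real CARD('k) * real CARD('r) * (xmax * vmax) * (norm Y / ((a + b) * (xmin * vmin)))"
  proof (rule mult_left_mono[OF tY])
    have "0 \<le> xmax" using xpos[rule_format, of undefined] xhi[rule_format, of undefined] by linarith
    moreover have "0 \<le> vmax" using vpos[rule_format, of undefined] vhi[rule_format, of undefined] by linarith
    ultimately show "0 \<le> real CARD('k) * real CARD('r) * (xmax * vmax)" by simp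
  qed
  also have "\<dots> = real CARD('k) * real CARD('r) * (xmax * vmax) / ((a + b) * (xmin * vmin)) * norm Y"
    by simp
  finally show "norm X \<le> real CARD('k) * real CARD('r) * (xmax * vmax) / ((a + b) * (xmin * vmin)) * norm (syl A1 M X)"
    unfolding Y_def .
qed


lemma shift_comp: fixes A :: "real^'n::finite^'n"
  shows "((A - t *\<^sub>R mat 1) *v z)$i = (A *v z)$i - t * z$i"
proof -
  have "((A - t *\<^sub>R mat 1) *v z)$i = (\<Sum>j\<in>UNIV. A$i$j * z$j - (if i = j then t * z$j else 0))"
    unfolding matrix_vector_mult_def by (auto simp: mat_def algebra_simps intro!: sum.cong)
  also have "\<dots> = (A *v z)$i - t * z$i"
    by (simp add: sum_subtractf matrix_vector_mult_def)
  finally show ?thesis .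
qed

lemma stable_inj: fixes A :: "real^'n::finite^'n"
  assumes st: "stable A" and s0: "0 \<le> s" and y: "(A - s *\<^sub>R mat 1) *v y = 0"
  shows "y = 0"
proof (rule ccontr)
  assume yne: "y \<noteq> 0"
  define yc where "yc = (\<chi> i. complex_of_real (y$i))"
  have Ay: "(A *v y)$i = s * y$i" for i using y shift_comp[of A s y i] by (simp add: vec_eq_iff)
  have "yc \<noteq> 0" using yne by (simp add: yc_def vec_eq_iff)
  moreover have "cmat A *v yc = complex_of_real s *s yc"
  proof -
    have "(cmat A *v yc)$i = (complex_of_real s *s yc)$i" for i
    proof -
      have "(cmat A *v yc)$i = complex_of_real (\<Sum>j\<in>UNIV. A$i$j * y$j)"
        by (simp add: cmat_def yc_def matrix_vector_mult_def)
      also have "\<dots> = complex_of_real ((A *v y)$i)" by (simp add: matrix_vector_mult_def)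
      also have "\<dots> = (complex_of_real s *s yc)$i" by (simp add: Ay yc_def)
      finally show ?thesis .
    qed
    then show ?thesis by (simp add: vec_eq_iff)
  qed
  ultimately have "is_eigenvalue A (complex_of_real s)" unfolding is_eigenvalue_def by blast
  then have "Re (complex_of_real s) < 0" using st unfolding stable_def by blast
  then show False using s0 by simp
qed

lemma stable_solve: fixes A :: "real^'n::finite^'n"
  assumes st: "stable A" and s0: "0 \<le> s"
  shows "\<exists>z. (A - s *\<^sub>R mat 1) *v z = w"
proof -
  have inj: "inj ((*v) (A - s *\<^sub>R mat 1))"
    using linear_injective_0[OF matrix_vector_mul_linear] stable_inj[OF st s0] by blast
  have "surj ((*v) (A - s *\<^sub>R mat 1))"
    by (rule linear_injective_imp_surjective[OF matrix_vector_mul_linear inj]) simp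
  then show ?thesis by (metis surjD)
qed

lemma margin: fixes A :: "real^'n::finite^'n"
  assumes wpos: "\<forall>i. 0 < w$i" and lt: "\<forall>i. (A *v w)$i < t * w$i"
  shows "\<exists>d>0. \<forall>i. (A *v w)$i \<le> (t - d) * w$i"
proof -
  define d where "d = Min (range (\<lambda>i. (t * w$i - (A *v w)$i) / w$i))"
  have "d > 0" unfolding d_def using wpos lt by (subst Min_gr_iff) auto
  moreover have "(A *v w)$i \<le> (t - d) * w$i" for i
  proof -
    have "d \<le> (t * w$i - (A *v w)$i) / w$i" unfolding d_def by (rule Min_le) auto
    then have "d * w$i \<le> t * w$i - (A *v w)$i" using wpos by (simp add: le_divide_eq)
    then show ?thesis by (simp add: algebra_simps)
  qed
  ultimately show ?thesis by blast
qed

lemma maxprinc: fixes A :: "real^'n::finite^'n"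
  assumes mA: "metzler A" and wpos: "\<forall>i. 0 < w$i" and lt: "\<forall>i. (A *v w)$i < t * w$i"
    and gt: "\<forall>i. (A *v y)$i - t * y$i > 0"
  shows "y$k < 0"
proof -
  define g where "g = (\<lambda>i. y$i / w$i)"
  define s where "s = Max (range g)"
  have "s \<in> range g" unfolding s_def by (rule Max_in) auto
  then obtain i where si: "s = g i" by auto
  have bnd: "y$l \<le> s * w$l" for l
  proof -
    have "g l \<le> s" unfolding s_def by (rule Max_ge) auto
    then show ?thesis using wpos by (simp add: g_def divide_le_eq)
  qed
  have yi: "y$i = s * w$i" using si wpos by (simp add: g_def) (metis less_irrefl nonzero_eq_divide_eq)
  have "s < 0"
  proof (rule ccontr)
    assume "\<not> s < 0" then have s0: "0 \<le> s" by simp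
    have "(A *v y)$i = A$i$i * y$i + (\<Sum>k\<in>UNIV - {i}. A$i$k * y$k)"
      unfolding matrix_vector_mult_def by (simp add: sum_split_at[of _ i])
    also have "\<dots> = A$i$i * (s * w$i) + (\<Sum>k\<in>UNIV - {i}. A$i$k * y$k)" using yi by simp
    also have "\<dots> \<le> A$i$i * (s * w$i) + (\<Sum>k\<in>UNIV - {i}. A$i$k * (s * w$k))"
      by (intro add_left_mono sum_mono mult_left_mono bnd) (use mA in \<open>auto simp: metzler_def\<close>)
    also have "\<dots> = s * (A *v w)$i"
      unfolding matrix_vector_mult_def by (simp add: sum_split_at[of _ i] sum_distrib_left algebra_simps)
    finally have "(A *v y)$i - t * y$i \<le> s * ((A *v w)$i - t * w$i)" using yi by (simp add: algebra_simps)
    also have "\<dots> \<le> 0" using s0 lt by (simp add: mult_nonneg_nonpos less_imp_le)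
    finally show False using gt[rule_format, of i] by linarith
  qed
  then have "s * w$k < 0" using wpos by (simp add: mult_neg_pos)
  then show ?thesis using bnd[of k] by linarith
qed

lemma stable_posvec: fixes A :: "real^'n::finite^'n"
  assumes st: "stable A" and mA: "metzler A"
  shows "\<exists>w. (\<forall>i. 0 < w$i) \<and> (\<forall>i. (A *v w)$i < 0)"
proof -
  define P where "P t \<longleftrightarrow> (\<exists>w. (\<forall>i. 0 < w$i) \<and> (\<forall>i. (A *v w)$i < t * w$i))" for t
  have up: "P t'" if "P t" "t \<le> t'" for t t'
  proof -
    obtain w where w: "\<forall>i. 0 < w$i" "\<forall>i. (A *v w)$i < t * w$i" using \<open>P t\<close> unfolding P_def by blast
    have "(A *v w)$i < t' * w$i" for i using w that(2) mult_right_mono[OF that(2) less_imp_le[OF w(1)[rule_format, of i]]]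
      by (metis order_less_le_trans)
    then show ?thesis using w(1) unfolding P_def by blast
  qed
  have opn: "\<exists>d>0. P (t - d)" if "P t" for t
  proof -
    obtain w where w: "\<forall>i. 0 < w$i" "\<forall>i. (A *v w)$i < t * w$i" using \<open>P t\<close> unfolding P_def by blast
    obtain d where d: "d > 0" "\<forall>i. (A *v w)$i \<le> (t - d) * w$i" using margin[OF w] by blast
    have "(A *v w)$i < (t - d/2) * w$i" for i
    proof -
      have "(t - d) * w$i < (t - d/2) * w$i" using w(1) d(1) by (intro mult_strict_right_mono) auto
      then show ?thesis using d(2) by (metis order_le_less_trans)
    qed
    then have "P (t - d/2)" using w(1) unfolding P_def by blast
    then show ?thesis using d(1) by (intro exI[of _ "d/2"]) auto
  qed
  have cls: "P T" if T0: "0 \<le> T" and all: "\<forall>t>T. P t" for T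
  proof -
    obtain z where z: "(A - T *\<^sub>R mat 1) *v z = (\<chi> i. - 1)" using stable_solve[OF st T0] by blast
    have Az: "(A *v z)$i = T * z$i - 1" for i using arg_cong[OF z, of "\<lambda>v. v$i"] shift_comp[of A T z i] by simp
    define bz where "bz = (\<Sum>i\<in>UNIV. \<bar>z$i\<bar>) + 1"
    have bz1: "bz \<ge> 1" unfolding bz_def by (simp add: sum_nonneg)
    have zb: "\<bar>z$i\<bar> \<le> bz" for i
    proof -
      have "\<bar>z$i\<bar> \<le> (\<Sum>i\<in>UNIV. \<bar>z$i\<bar>)" by (rule member_le_sum) auto
      then show ?thesis unfolding bz_def by simp
    qed
    define t where "t = T + 1 / (2 * bz)"
    have "t > T" unfolding t_def using bz1 by simp
    then obtain w where w: "\<forall>i. 0 < w$i" "\<forall>i. (A *v w)$i < t * w$i" using all unfolding P_def by blast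
    have gt: "\<forall>i. (A *v (- z))$i - t * (- z)$i > 0"
    proof
      fix i
      have "(A *v (- z))$i = - (A *v z)$i" by (simp add: matrix_vector_mult_def sum_negf)
      then have e: "(A *v (- z))$i - t * (- z)$i = 1 + (t - T) * z$i" using Az by (simp add: algebra_simps)
      have "\<bar>(t - T) * z$i\<bar> = \<bar>z$i\<bar> / (2 * bz)" unfolding t_def using bz1 by (simp add: abs_mult)
      also have "\<dots> \<le> bz / (2 * bz)" using zb bz1 by (intro divide_right_mono) auto
      also have "\<dots> = 1/2" using bz1 by simp
      finally show "(A *v (- z))$i - t * (- z)$i > 0" unfolding e by linarith
    qed
    have "(- z)$k < 0" for k by (rule maxprinc[OF mA w gt])
    then have "\<forall>k. 0 < z$k" by simp
    moreover have "\<forall>i. (A *v z)$i < T * z$i" using Az by simp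
    ultimately show ?thesis unfolding P_def by blast
  qed
  define SA where "SA = (\<Sum>i\<in>UNIV. \<Sum>j\<in>UNIV. \<bar>A$i$j\<bar>) + 1"
  have "P SA"
  proof -
    have "(A *v (\<chi> i. 1))$i < SA * (\<chi> i. 1)$i" for i
    proof -
      have "(A *v (\<chi> i. 1))$i = (\<Sum>j\<in>UNIV. A$i$j)" by (simp add: matrix_vector_mult_def)
      also have "\<dots> \<le> (\<Sum>j\<in>UNIV. \<bar>A$i$j\<bar>)" by (intro sum_mono) auto
      also have "\<dots> \<le> (\<Sum>i\<in>UNIV. \<Sum>j\<in>UNIV. \<bar>A$i$j\<bar>)"
        by (rule member_le_sum[of i UNIV "\<lambda>i. \<Sum>j\<in>UNIV. \<bar>A$i$j\<bar>"]) (auto intro: sum_nonneg)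
      finally show ?thesis unfolding SA_def by simp
    qed
    then show ?thesis unfolding P_def by (intro exI[of _ "\<chi> i. 1"]) auto
  qed
  have SA0: "0 \<le> SA" unfolding SA_def by (simp add: sum_nonneg add_nonneg_nonneg)
  define S where "S = {t. 0 \<le> t \<and> P t}"
  define T where "T = Inf S"
  have Sne: "S \<noteq> {}" using \<open>P SA\<close> SA0 unfolding S_def by blast
  have bdd: "bdd_below S" unfolding S_def by (rule bdd_belowI[of _ 0]) auto
  have T0: "0 \<le> T" unfolding T_def by (rule cInf_greatest[OF Sne]) (auto simp: S_def)
  have allT: "\<forall>t>T. P t"
  proof (intro allI impI)
    fix t assume "T < t"
    then obtain u where "u \<in> S" "u < t" using cInf_less_iff[OF Sne bdd] unfolding T_def by blast
    then show "P t" using up unfolding S_def by auto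
  qed
  have PT: "P T" by (rule cls[OF T0 allT])
  have "T = 0"
  proof (rule ccontr)
    assume "T \<noteq> 0" then have Tp: "0 < T" using T0 by simp
    obtain d where d: "d > 0" "P (T - d)" using opn[OF PT] by blast
    have "P (max (T - d) (T/2))" using up[OF d(2)] by simp
    then have "max (T - d) (T/2) \<in> S" unfolding S_def using Tp by auto
    then have "T \<le> max (T - d) (T/2)" unfolding T_def by (rule cInf_lower[OF _ bdd])
    then show False using d(1) Tp by simp
  qed
  then show ?thesis using PT unfolding P_def by simp
qed


definition phi :: "real^'r::finite^'p::finite \<Rightarrow> real^'n::finite^'p \<Rightarrow> real^'r^'r \<Rightarrow> real^'r^'n \<Rightarrow> real" where
  "phi Cr C P X = (1/2) * mtrace (Cr ** P ** transpose Cr - 2 *\<^sub>R (Cr ** transpose X ** transpose C))"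

lemma mtrace_add: "mtrace (X + Y) = mtrace X + mtrace Y"
  by (simp add: mtrace_def sum.distrib)

lemma phi_diff: "phi Cr C P1 X1 - phi Cr C P2 X2 = phi Cr C (P1 - P2) (X1 - X2)"
  unfolding phi_def by (simp add: mm_simps mtrace_diff mtrace_add mtrace_scale algebra_simps)

lemma phi_add: "phi Cr C (P1 + P2) (X1 + X2) = phi Cr C P1 X1 + phi Cr C P2 X2"
  unfolding phi_def by (simp add: mm_simps mtrace_diff mtrace_add mtrace_scale algebra_simps)

lemma phi_scale: "phi Cr C (c *\<^sub>R P) (c *\<^sub>R X) = c * phi Cr C P X"
  unfolding phi_def by (simp add: mm_simps mtrace_diff mtrace_scale algebra_simps)

lemma phi_bound: "\<bar>phi Cr C P X\<bar> \<le> real CARD('p::finite) * (norm Cr * norm Cr * norm P + norm Cr * norm X * norm C)"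
  for Cr :: "real^'r::finite^'p"
proof -
  let ?W1 = "Cr ** P ** transpose Cr" and ?W2 = "Cr ** transpose X ** transpose C"
  have w1: "norm ?W1 \<le> norm Cr * norm P * norm Cr"
    by (rule order_trans[OF norm_mmult]) (simp only: norm_transpose, rule mult_right_mono[OF norm_mmult norm_ge_zero])
  have w2: "norm ?W2 \<le> norm Cr * norm X * norm C"
    by (rule order_trans[OF norm_mmult]) (simp only: norm_transpose, rule order_trans[OF mult_right_mono[OF norm_mmult norm_ge_zero]], simp only: norm_transpose order_refl)
  have "\<bar>phi Cr C P X\<bar> = (1/2) * \<bar>mtrace (?W1 - 2 *\<^sub>R ?W2)\<bar>" by (simp add: phi_def abs_mult)
  also have "\<dots> \<le> (1/2) * (real CARD('p) * norm (?W1 - 2 *\<^sub>R ?W2))"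
    by (intro mult_left_mono mtrace_bound) auto
  also have "norm (?W1 - 2 *\<^sub>R ?W2) \<le> norm ?W1 + 2 * norm ?W2"
    using norm_triangle_ineq4[of ?W1 "2 *\<^sub>R ?W2"] by simp
  finally have "\<bar>phi Cr C P X\<bar> \<le> (1/2) * (real CARD('p) * (norm ?W1 + 2 * norm ?W2))"
    by (simp add: mult_left_mono)
  also have "\<dots> \<le> (1/2) * (real CARD('p) * (2 * (norm Cr * norm Cr * norm P + norm Cr * norm X * norm C)))"
  proof (intro mult_left_mono)
    have "norm ?W1 \<le> norm Cr * norm Cr * norm P" using w1 by (simp add: mult_ac)
    moreover have "0 \<le> norm Cr * norm Cr * norm P" by simp
    ultimately show "norm ?W1 + 2 * norm ?W2 \<le> 2 * (norm Cr * norm Cr * norm P + norm Cr * norm X * norm C)"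
      using w2 by (smt (verit))
  qed auto
  finally have h: "\<bar>phi Cr C P X\<bar> \<le> (1/2) * (real CARD('p) * (2 * (norm Cr * norm Cr * norm P + norm Cr * norm X * norm C)))" .
  have eq: "(1/2) * (real CARD('p) * (2 * (norm Cr * norm Cr * norm P + norm Cr * norm X * norm C)))
      = real CARD('p) * (norm Cr * norm Cr * norm P + norm Cr * norm X * norm C)" by simp
  show ?thesis using h unfolding eq .
qed

lemma Psol_eq: "Psol M Br = sol M M (Br ** transpose Br)"
  by (simp add: Psol_def sol_def)
lemma Xsol_eq: "Xsol A B M Br = sol A M (B ** transpose Br)"
  by (simp add: Xsol_def sol_def)
lemma fobj_eq: "fobj A B C M Br Cr = phi Cr C (sol M M (Br ** transpose Br)) (sol A M (B ** transpose Br))"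
  by (simp add: fobj_def phi_def Psol_eq Xsol_eq)

definition Df where
  "Df A B C Br Cr M H = phi Cr C
     (sol M M (H ** sol M M (Br ** transpose Br) + sol M M (Br ** transpose Br) ** transpose H))
     (sol A M (0 ** sol A M (B ** transpose Br) + sol A M (B ** transpose Br) ** transpose H))"

definition Gm where
  "Gm A B C Br Cr M = (\<Sum>b\<in>Basis. Df A B C Br Cr M b *\<^sub>R b)"

lemma Df_linear: assumes "coer A M K" "coer M M K'"
  shows "linear (Df A B C Br Cr M)"
proof -
  define P where "P = sol M M (Br ** transpose Br)"
  define X where "X = sol A M (B ** transpose Br)"
  define f1 where "f1 = (\<lambda>H. sol M M (H ** P + P ** transpose H))"
  define f2 where "f2 = (\<lambda>H. sol A M (0 ** X + X ** transpose H))"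
  have l1: "linear f1"
  proof -
    have "linear (\<lambda>H. H ** P + P ** transpose H)"
      by (rule linearI) (simp_all add: mm_simps algebra_simps)
    from linear_compose[OF this sol_linear[OF assms(2)]] show ?thesis by (simp add: o_def f1_def)
  qed
  have l2: "linear f2"
  proof -
    have "linear (\<lambda>H. 0 ** X + X ** transpose H)"
      by (rule linearI) (simp_all add: mm_simps algebra_simps)
    from linear_compose[OF this sol_linear[OF assms(1)]] show ?thesis by (simp add: o_def f2_def)
  qed
  have e: "Df A B C Br Cr M = (\<lambda>H. phi Cr C (f1 H) (f2 H))"
    by (simp add: fun_eq_iff Df_def f1_def f2_def P_def X_def)
  show ?thesis unfolding e
    by (rule linearI) (simp_all add: linear_add[OF l1] linear_add[OF l2] linear_scale[OF l1] linear_scale[OF l2] phi_add phi_scale)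
qed

lemma linear_repr: fixes L :: "'a::euclidean_space \<Rightarrow> real"
  assumes "linear L" shows "L H = (\<Sum>b\<in>Basis. L b *\<^sub>R b) \<bullet> H"
proof -
  have "L H = L (\<Sum>b\<in>Basis. (H \<bullet> b) *\<^sub>R b)" by (simp add: euclidean_representation)
  also have "\<dots> = (\<Sum>b\<in>Basis. (H \<bullet> b) * L b)"
    by (simp add: linear_sum[OF assms] linear_scale[OF assms] o_def)
  also have "\<dots> = (\<Sum>b\<in>Basis. L b *\<^sub>R b) \<bullet> H"
    by (simp add: inner_sum_right inner_commute) (simp add: mult.commute)
  finally show ?thesis .
qed

lemma deriv_from_quad: fixes f :: "'a::real_normed_vector \<Rightarrow> real"
  assumes bl: "bounded_linear f'" and rho: "0 < \<rho>" and c0: "0 \<le> c"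
    and q: "\<And>y. norm (y - x) < \<rho> \<Longrightarrow> \<bar>f y - f x - f' (y - x)\<bar> \<le> c * (norm (y - x))^2"
  shows "(f has_derivative f') (at x)"
  unfolding has_derivative_at_alt
proof (intro conjI bl allI impI)
  fix e :: real assume e: "0 < e"
  define d where "d = min \<rho> (e / (c + 1))"
  have d0: "0 < d" unfolding d_def using rho e c0 by simp
  show "\<exists>d>0. \<forall>y. norm (y - x) < d \<longrightarrow> norm (f y - f x - f' (y - x)) \<le> e * norm (y - x)"
  proof (intro exI[of _ d] conjI allI impI d0)
    fix y assume y: "norm (y - x) < d"
    let ?h = "norm (y - x)"
    have "\<bar>f y - f x - f' (y - x)\<bar> \<le> c * ?h^2" using q y unfolding d_def by simp
    also have "\<dots> \<le> (c + 1) * ?h^2" by (intro mult_right_mono) auto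
    also have "\<dots> = (c + 1) * ?h * ?h" by (simp add: power2_eq_square)
    also have "\<dots> \<le> (c + 1) * (e / (c + 1)) * ?h"
      using y c0 unfolding d_def by (intro mult_right_mono mult_left_mono) auto
    also have "\<dots> = e * ?h" using c0 by simp
    finally show "norm (f y - f x - f' (y - x)) \<le> e * ?h" by simp
  qed
qed


lemma chain_ineq: fixes a b c K1 K2 K3 t1 t2 r :: real
  assumes "0 \<le> K1" "0 \<le> t1" "0 \<le> K2" "0 \<le> t2" "a \<le> K1*(t1*b)" "b \<le> K2*(t2*c)" "c \<le> K3 * r"
  shows "a \<le> K1*K2*K3*t1*t2*r"
proof -
  have "K2*(t2*c) \<le> K2*(t2*(K3*r))" using assms by (intro mult_left_mono) auto
  then have "b \<le> K2*(t2*(K3*r))" using assms(6) by linarith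
  then have "K1*(t1*b) \<le> K1*(t1*(K2*(t2*(K3*r))))" using assms by (intro mult_left_mono) auto
  then have "a \<le> K1*(t1*(K2*(t2*(K3*r))))" using assms(5) by linarith
  then show ?thesis by (simp add: mult_ac)
qed

lemma has_deriv_Df:
  fixes A :: "real^'n::finite^'n" and B :: "real^'m::finite^'n" and C :: "real^'n^'p::finite"
    and Br :: "real^'m^'r::finite" and Cr :: "real^'r^'p" and M :: "real^'r^'r"
  assumes cA: "coer A M K" and cL: "coer M M K" and K0: "0 < K"
  shows "((\<lambda>X. fobj A B C X Br Cr) has_derivative Df A B C Br Cr M) (at M)"
proof -
  let ?RP = "Br ** transpose Br" and ?RX = "B ** transpose Br"
  define c where "c = real CARD('p) * (norm Cr * norm Cr * (8 * K^3 * norm ?RP) + norm Cr * (2 * K^3 * norm ?RX) * norm C)"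
  have c0: "0 \<le> c" unfolding c_def using K0 by simp
  show ?thesis
  proof (rule deriv_from_quad[of _ "1/(4*K)" c])
    show "bounded_linear (Df A B C Br Cr M)"
      using Df_linear[OF cA cL] by (simp add: linear_conv_bounded_linear)
    show "0 < 1 / (4 * K)" using K0 by simp
    show "0 \<le> c" by (rule c0)
  next
    fix y assume y: "norm (y - M) < 1 / (4 * K)"
    define h where "h = norm (y - M)"
    have h0: "0 \<le> h" unfolding h_def by simp
    have hK: "4 * K * h \<le> 1" using y K0 unfolding h_def by (simp add: field_simps)
    have cA': "coer A y (2 * K)" by (rule coer_pert[OF cA]) (use hK in \<open>simp add: h_def\<close>)
    have cL': "coer y y (2 * K)" by (rule coer_pert[OF cL]) (use hK in \<open>simp add: h_def\<close>)
    define PM where "PM = sol M M ?RP"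
    define Py where "Py = sol y y ?RP"
    define XM where "XM = sol A M ?RX"
    define Xy where "Xy = sol A y ?RX"
    define P' where "P' = sol M M ((y - M) ** PM + PM ** transpose (y - M))"
    define X' where "X' = sol A M (0 ** XM + XM ** transpose (y - M))"
    have Prem: "norm (Py - PM - P') \<le> K * K * (2 * K) * (h + h) * (h + h) * norm ?RP"
    proof -
      have "norm (Py - PM - P') \<le> K * ((h + h) * norm (Py - PM))"
        using sol_rem[OF cL cL', of ?RP] unfolding Py_def PM_def P'_def h_def .
      moreover have "norm (Py - PM) \<le> K * ((h + h) * norm Py)"
        using sol_diff_bound[OF cL cL', of ?RP] unfolding Py_def PM_def h_def .
      moreover have "norm Py \<le> (2 * K) * norm ?RP" unfolding Py_def by (rule coer_bound[OF cL'])
      ultimately show ?thesis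
        using K0 h0 by (intro chain_ineq) auto
    qed
    have Xrem: "norm (Xy - XM - X') \<le> K * K * (2 * K) * h * h * norm ?RX"
    proof -
      have "norm (Xy - XM - X') \<le> K * ((norm (A - A) + h) * norm (Xy - XM))"
        using sol_rem[OF cA cA', of ?RX] unfolding Xy_def XM_def X'_def h_def by (simp only: diff_self)
      then have a: "norm (Xy - XM - X') \<le> K * (h * norm (Xy - XM))" by simp
      have "norm (Xy - XM) \<le> K * ((norm (A - A) + h) * norm Xy)"
        using sol_diff_bound[OF cA cA', of ?RX] unfolding Xy_def XM_def h_def .
      then have b: "norm (Xy - XM) \<le> K * (h * norm Xy)" by simp
      have "norm Xy \<le> (2 * K) * norm ?RX" unfolding Xy_def by (rule coer_bound[OF cA'])
      then show ?thesis using a b K0 h0 by (intro chain_ineq) auto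
    qed
    have eq: "fobj A B C y Br Cr - fobj A B C M Br Cr - Df A B C Br Cr M (y - M) = phi Cr C (Py - PM - P') (Xy - XM - X')"
      unfolding fobj_eq Df_def phi_diff Py_def PM_def Xy_def XM_def P'_def X'_def ..
    have "\<bar>phi Cr C (Py - PM - P') (Xy - XM - X')\<bar> \<le> real CARD('p) * (norm Cr * norm Cr * norm (Py - PM - P') + norm Cr * norm (Xy - XM - X') * norm C)"
      by (rule phi_bound)
    also have "\<dots> \<le> real CARD('p) * (norm Cr * norm Cr * ((8 * K^3 * norm ?RP) * h^2) + norm Cr * ((2 * K^3 * norm ?RX) * h^2) * norm C)"
    proof -
      have p: "norm (Py - PM - P') \<le> (8 * K^3 * norm ?RP) * h^2"
        using Prem K0 by (simp add: field_simps power2_eq_square power3_eq_cube)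
      have x: "norm (Xy - XM - X') \<le> (2 * K^3 * norm ?RX) * h^2"
        using Xrem K0 by (simp add: field_simps power2_eq_square power3_eq_cube)
      show ?thesis
        by (intro mult_left_mono add_mono mult_right_mono p x) auto
    qed
    also have "\<dots> = c * h^2" unfolding c_def by (simp add: algebra_simps)
    finally show "\<bar>fobj A B C y Br Cr - fobj A B C M Br Cr - Df A B C Br Cr M (y - M)\<bar> \<le> c * (norm (y - M))^2"
      unfolding eq h_def .
  qed
qed

lemma grad_eq:
  assumes cA: "coer A M K" and cL: "coer M M K" and K0: "0 < K"
  shows "grad_Ar A B C M Br Cr = Gm A B C Br Cr M"
proof -
  have lin: "linear (Df A B C Br Cr M)" by (rule Df_linear[OF cA cL])
  have fe: "Df A B C Br Cr M = (\<lambda>H. Gm A B C Br Cr M \<bullet> H)"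
    unfolding Gm_def by (rule ext) (rule linear_repr[OF lin])
  have d: "((\<lambda>X. fobj A B C X Br Cr) has_derivative (\<lambda>H. Gm A B C Br Cr M \<bullet> H)) (at M)"
    using has_deriv_Df[OF cA cL K0, where B=B and C=C and Br=Br and Cr=Cr] unfolding fe .
  show ?thesis unfolding grad_Ar_def
  proof (rule the_equality)
    show "((\<lambda>X. fobj A B C X Br Cr) has_derivative (\<lambda>H. Gm A B C Br Cr M \<bullet> H)) (at M)" by (rule d)
  next
    fix G assume "((\<lambda>X. fobj A B C X Br Cr) has_derivative (\<lambda>H. G \<bullet> H)) (at M)"
    then have "(\<lambda>H. G \<bullet> H) = (\<lambda>H. Gm A B C Br Cr M \<bullet> H)" using d by (rule has_derivative_unique)
    then have "G \<bullet> (G - Gm A B C Br Cr M) = Gm A B C Br Cr M \<bullet> (G - Gm A B C Br Cr M)" by metis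
    then have "(G - Gm A B C Br Cr M) \<bullet> (G - Gm A B C Br Cr M) = 0" by (simp add: inner_diff_left)
    then show "G = Gm A B C Br Cr M" by simp
  qed
qed


lemma chain2: fixes a b K1 K2 t r :: real
  assumes "0 \<le> K1" "0 \<le> t" "a \<le> K1*(t*b)" "b \<le> K2*r"
  shows "a \<le> K1*K2*t*r"
proof -
  have "K1*(t*b) \<le> K1*(t*(K2*r))" using assms by (intro mult_left_mono) auto
  then show ?thesis using assms(3) by (simp add: mult_ac)
qed

lemma Df_lip:
  fixes A :: "real^'n::finite^'n" and B :: "real^'m::finite^'n" and C :: "real^'n^'p::finite"
    and Br :: "real^'m^'r::finite" and Cr :: "real^'r^'p" and M1 M2 b :: "real^'r^'r"
  assumes cA1: "coer A M1 K" and cL1: "coer M1 M1 K" and cA2: "coer A M2 K" and cL2: "coer M2 M2 K"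
    and K0: "0 < K" and nb: "norm b = 1"
  shows "\<bar>Df A B C Br Cr M1 b - Df A B C Br Cr M2 b\<bar>
    \<le> real CARD('p) * (norm Cr * norm Cr * (8 * K^3 * norm (Br ** transpose Br))
        + norm Cr * (2 * K^3 * norm (B ** transpose Br)) * norm C) * norm (M1 - M2)"
proof -
  let ?RP = "Br ** transpose Br" and ?RX = "B ** transpose Br"
  define d where "d = norm (M1 - M2)"
  have d0: "0 \<le> d" unfolding d_def by simp
  define P1 where "P1 = sol M1 M1 ?RP"
  define P2 where "P2 = sol M2 M2 ?RP"
  define X1 where "X1 = sol A M1 ?RX"
  define X2 where "X2 = sol A M2 ?RX"
  define W1 where "W1 = sol M1 M1 (b ** P1 + P1 ** transpose b)"
  define W2 where "W2 = sol M2 M2 (b ** P2 + P2 ** transpose b)"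
  define V1 where "V1 = sol A M1 (0 ** X1 + X1 ** transpose b)"
  define V2 where "V2 = sol A M2 (0 ** X2 + X2 ** transpose b)"
  have eq: "Df A B C Br Cr M1 b - Df A B C Br Cr M2 b = phi Cr C (W1 - W2) (V1 - V2)"
    unfolding Df_def phi_diff W1_def W2_def V1_def V2_def P1_def P2_def X1_def X2_def ..
  have p12: "norm (P1 - P2) \<le> K * K * (d + d) * norm ?RP"
    using sol_diff_bound[OF cL2 cL1, of ?RP] coer_bound[OF cL1, of ?RP] K0 d0
    unfolding P1_def P2_def d_def by (intro chain2) auto
  have w2: "norm W2 \<le> K * K * (1 + 1) * norm ?RP"
  proof -
    have "norm W2 \<le> K * norm (b ** P2 + P2 ** transpose b)" unfolding W2_def by (rule coer_bound[OF cL2])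
    also have "\<dots> \<le> K * ((norm b + norm b) * norm P2)" by (intro mult_left_mono nrm2) (use K0 in auto)
    finally show ?thesis using coer_bound[OF cL2, of ?RP] K0 unfolding nb P2_def by (intro chain2) auto
  qed
  have Wb: "norm (W1 - W2) \<le> 8 * K^3 * norm ?RP * d"
  proof -
    have "norm (W1 - W2) \<le> K * ((norm b + norm b) * norm (P1 - P2) + (d + d) * norm W2)"
      using sol_fo_diff[OF cL2 cL1, where ?E1.0=b and ?E2.0=b and R="?RP"] unfolding W1_def W2_def P1_def P2_def d_def .
    also have "\<dots> \<le> K * ((1 + 1) * (K * K * (d + d) * norm ?RP) + (d + d) * (K * K * (1 + 1) * norm ?RP))"
      unfolding nb using p12 w2 K0 d0 by (intro mult_left_mono add_mono mult_left_mono) auto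
    also have "\<dots> = 8 * K^3 * norm ?RP * d" by (simp add: algebra_simps power3_eq_cube)
    finally show ?thesis .
  qed
  have x12: "norm (X1 - X2) \<le> K * K * d * norm ?RX"
  proof -
    have "norm (X1 - X2) \<le> K * ((norm (A - A) + d) * norm X1)"
      using sol_diff_bound[OF cA2 cA1, of ?RX] unfolding X1_def X2_def d_def .
    then have "norm (X1 - X2) \<le> K * (d * norm X1)" by simp
    then show ?thesis using coer_bound[OF cA1, of ?RX] K0 d0 unfolding X1_def by (intro chain2) auto
  qed
  have v2: "norm V2 \<le> K * K * 1 * norm ?RX"
  proof -
    have "norm V2 \<le> K * norm (0 ** X2 + X2 ** transpose b)" unfolding V2_def by (rule coer_bound[OF cA2])
    also have "\<dots> \<le> K * ((norm (0::real^'n^'n) + norm b) * norm X2)" by (intro mult_left_mono nrm2) (use K0 in auto)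
    finally show ?thesis using coer_bound[OF cA2, of ?RX] K0 unfolding nb X2_def by (intro chain2) auto
  qed
  have Vb: "norm (V1 - V2) \<le> 2 * K^3 * norm ?RX * d"
  proof -
    have "norm (V1 - V2) \<le> K * ((norm (0::real^'n^'n) + norm b) * norm (X1 - X2) + (norm (A - A) + d) * norm V2)"
      using sol_fo_diff[OF cA2 cA1, where ?E1.0=0 and ?E2.0=b and R="?RX"] unfolding V1_def V2_def X1_def X2_def d_def .
    then have "norm (V1 - V2) \<le> K * (1 * norm (X1 - X2) + d * norm V2)" unfolding nb by simp
    also have "\<dots> \<le> K * (1 * (K * K * d * norm ?RX) + d * (K * K * 1 * norm ?RX))"
      using x12 v2 K0 d0 by (intro mult_left_mono add_mono mult_left_mono) auto
    also have "\<dots> = 2 * K^3 * norm ?RX * d" by (simp add: algebra_simps power3_eq_cube)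
    finally show ?thesis .
  qed
  have "\<bar>phi Cr C (W1 - W2) (V1 - V2)\<bar> \<le> real CARD('p) * (norm Cr * norm Cr * norm (W1 - W2) + norm Cr * norm (V1 - V2) * norm C)"
    by (rule phi_bound)
  also have "\<dots> \<le> real CARD('p) * (norm Cr * norm Cr * (8 * K^3 * norm ?RP * d) + norm Cr * (2 * K^3 * norm ?RX * d) * norm C)"
    by (intro mult_left_mono add_mono mult_right_mono Wb Vb) auto
  also have "\<dots> = real CARD('p) * (norm Cr * norm Cr * (8 * K^3 * norm ?RP) + norm Cr * (2 * K^3 * norm ?RX) * norm C) * d"
    by (simp add: algebra_simps)
  finally show ?thesis unfolding eq d_def .
qed

lemma Gm_lip:
  fixes A :: "real^'n::finite^'n" and B :: "real^'m::finite^'n" and C :: "real^'n^'p::finite"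
    and Br :: "real^'m^'r::finite" and Cr :: "real^'r^'p" and M1 M2 :: "real^'r^'r"
  assumes cA1: "coer A M1 K" and cL1: "coer M1 M1 K" and cA2: "coer A M2 K" and cL2: "coer M2 M2 K"
    and K0: "0 < K"
  shows "norm (Gm A B C Br Cr M1 - Gm A B C Br Cr M2)
    \<le> real (card (Basis :: (real^'r^'r) set)) * (real CARD('p) * (norm Cr * norm Cr * (8 * K^3 * norm (Br ** transpose Br))
        + norm Cr * (2 * K^3 * norm (B ** transpose Br)) * norm C) * norm (M1 - M2))"
proof -
  let ?L = "real CARD('p) * (norm Cr * norm Cr * (8 * K^3 * norm (Br ** transpose Br))
        + norm Cr * (2 * K^3 * norm (B ** transpose Br)) * norm C) * norm (M1 - M2)"
  have "Gm A B C Br Cr M1 - Gm A B C Br Cr M2 = (\<Sum>b\<in>Basis. (Df A B C Br Cr M1 b - Df A B C Br Cr M2 b) *\<^sub>R b)"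
    unfolding Gm_def by (simp add: sum_subtractf scaleR_diff_left)
  then have "norm (Gm A B C Br Cr M1 - Gm A B C Br Cr M2) \<le> (\<Sum>b\<in>(Basis :: (real^'r^'r) set). norm ((Df A B C Br Cr M1 b - Df A B C Br Cr M2 b) *\<^sub>R b))"
    by (simp only: norm_sum)
  also have "\<dots> \<le> (\<Sum>b\<in>(Basis :: (real^'r^'r) set). ?L)"
  proof (rule sum_mono)
    fix b :: "real^'r^'r" assume "b \<in> Basis"
    then have nb: "norm b = 1" by (rule norm_Basis)
    show "norm ((Df A B C Br Cr M1 b - Df A B C Br Cr M2 b) *\<^sub>R b) \<le> ?L"
      using Df_lip[OF cA1 cL1 cA2 cL2 K0 nb, where B=B and C=C and Br=Br and Cr=Cr] nb by simp
  qed
  also have "\<dots> = real (card (Basis :: (real^'r^'r) set)) * ?L" by simp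
  finally show ?thesis .
qed


lemma final_arith: fixes D cp K nCr nBr nB nC d rp rx G :: real
  assumes "0 \<le> D" "0 \<le> cp" "0 \<le> K" "0 \<le> nCr" "0 \<le> nBr" "0 \<le> nB" "0 \<le> nC" "0 \<le> d"
    "rp \<le> nBr * nBr" "rx \<le> nB * nBr"
    "G \<le> D * (cp * (nCr * nCr * (8 * K^3 * rp) + nCr * (2 * K^3 * rx) * nC) * d)"
  shows "G \<le> ((D * cp * (2 * K^3 * nB * nC) + 1) + (D * cp * (8 * K^3) + 1) * nBr * nCr) * nBr * nCr * d"
proof -
  have t1: "nCr * nCr * (8 * K^3 * rp) \<le> nCr * nCr * (8 * K^3 * (nBr * nBr))"
    using assms by (intro mult_left_mono) auto
  have t2: "nCr * (2 * K^3 * rx) * nC \<le> nCr * (2 * K^3 * (nB * nBr)) * nC"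
    using assms by (intro mult_right_mono mult_left_mono) auto
  have "D * (cp * (nCr * nCr * (8 * K^3 * rp) + nCr * (2 * K^3 * rx) * nC) * d)
      \<le> D * (cp * (nCr * nCr * (8 * K^3 * (nBr * nBr)) + nCr * (2 * K^3 * (nB * nBr)) * nC) * d)"
    using assms t1 t2 by (intro mult_left_mono mult_right_mono add_mono) auto
  also have "\<dots> = ((D * cp * (2 * K^3 * nB * nC) + 1) + (D * cp * (8 * K^3) + 1) * nBr * nCr) * nBr * nCr * d
      - (nBr * nCr * d + nBr * nCr * nBr * nCr * d)"
    by (simp add: algebra_simps)
  also have "\<dots> \<le> ((D * cp * (2 * K^3 * nB * nC) + 1) + (D * cp * (8 * K^3) + 1) * nBr * nCr) * nBr * nCr * d"
  proof -
    have "0 \<le> nBr * nCr * d" using assms by simp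
    moreover have "0 \<le> nBr * nCr * nBr * nCr * d" using assms by simp
    ultimately show ?thesis by linarith
  qed
  finally show ?thesis using assms(11) by linarith
qed

lemma S_props:
  fixes A0 M :: "real^'r::finite^'r" and v1 w1 :: "real^'r"
  assumes v1_eig: "A0 *v v1 = mu1 *s v1" and w1v1: "w1 \<bullet> v1 = 1" and v1_pos: "\<forall>i. v1$i > 0"
    and cond: "\<forall>i j. - gamma * (mat 1 :: real^'r^'r)$i$j \<le> M$i$j \<and>
         M$i$j \<le> (A0 - (mu1 + eps) *\<^sub>R (\<chi> k l. v1$k * w1$l))$i$j"
  shows "\<forall>i j. i \<noteq> j \<longrightarrow> 0 \<le> M$i$j" and "\<forall>i. (M *v v1)$i \<le> - eps * v1$i"
proof -
  show "\<forall>i j. i \<noteq> j \<longrightarrow> 0 \<le> M$i$j"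
  proof (intro allI impI)
    fix i j :: 'r assume "i \<noteq> j"
    then show "0 \<le> M$i$j" using cond[rule_format, of i j] by (simp add: mat_def)
  qed
  show "\<forall>i. (M *v v1)$i \<le> - eps * v1$i"
  proof
    fix i
    have "(M *v v1)$i = (\<Sum>j\<in>UNIV. M$i$j * v1$j)" by (simp add: matrix_vector_mult_def)
    also have "\<dots> \<le> (\<Sum>j\<in>UNIV. (A0$i$j - (mu1 + eps) * (v1$i * w1$j)) * v1$j)"
      using cond v1_pos by (intro sum_mono mult_right_mono) (auto simp: less_imp_le)
    also have "\<dots> = (\<Sum>j\<in>UNIV. A0$i$j * v1$j) - (mu1 + eps) * v1$i * (\<Sum>j\<in>UNIV. w1$j * v1$j)"
      by (simp add: algebra_simps sum_subtractf sum_distrib_left sum.distrib)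
    also have "(\<Sum>j\<in>UNIV. A0$i$j * v1$j) = mu1 * v1$i"
      using arg_cong[OF v1_eig, of "\<lambda>x. x$i"] by (simp add: matrix_vector_mult_def)
    also have "(\<Sum>j\<in>UNIV. w1$j * v1$j) = 1" using w1v1 by (simp add: inner_vec_def)
    finally show "(M *v v1)$i \<le> - eps * v1$i" by (simp add: algebra_simps)
  qed
qed

lemma vec_bounds: fixes w :: "real^'r::finite"
  assumes "\<forall>i. 0 < w$i"
  shows "\<exists>lo hi. 0 < lo \<and> (\<forall>i. lo \<le> w$i) \<and> (\<forall>i. w$i \<le> hi)"
proof (intro exI conjI allI)
  show "0 < Min (range (\<lambda>i. w$i))" using assms by (subst Min_gr_iff) auto
  fix i
  show "Min (range (\<lambda>i. w$i)) \<le> w$i" by (rule Min_le) auto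
  show "w$i \<le> Max (range (\<lambda>i. w$i))" by (rule Max_ge) auto
qed

theorem theorem3:
  fixes A :: "real^'n::finite^'n" and B :: "real^'m::finite^'n" and C :: "real^'n^'p::finite"
    and cl :: "'n \<Rightarrow> 'r::finite" and alpha :: real
    and mu1 :: real and v1 w1 :: "real^'r"
    and eps gamma :: real
  assumes A_stable: "stable A" and A_metzler: "metzler A"
    and B_nonneg: "\<forall>i j. B$i$j \<ge> 0" and C_nonneg: "\<forall>i j. C$i$j \<ge> 0"
    and cl_surj: "surj cl"
    and alpha_nonneg: "alpha \<ge> 0"
    and A0_stable: "stable (matrix_inv (transpose (part_mat cl) ** part_mat cl)
                       ** transpose (part_mat cl) ** A ** part_mat cl - alpha *\<^sub>R mat 1)"
    and A0_irred: "irreducible_mat (matrix_inv (transpose (part_mat cl) ** part_mat cl)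
                       ** transpose (part_mat cl) ** A ** part_mat cl - alpha *\<^sub>R mat 1)"
    and mu1_neg: "mu1 < 0"
    and mu1_dom: "\<forall>lam. is_eigenvalue (matrix_inv (transpose (part_mat cl) ** part_mat cl)
                       ** transpose (part_mat cl) ** A ** part_mat cl - alpha *\<^sub>R mat 1) lam
                     \<longrightarrow> lam \<noteq> complex_of_real mu1 \<longrightarrow> Re lam < mu1"
    and v1_pos: "\<forall>i. v1$i > 0" and w1_pos: "\<forall>i. w1$i > 0"
    and v1_eig: "(matrix_inv (transpose (part_mat cl) ** part_mat cl)
                   ** transpose (part_mat cl) ** A ** part_mat cl - alpha *\<^sub>R mat 1) *v v1 = mu1 *s v1"
    and w1_eig: "w1 v* (matrix_inv (transpose (part_mat cl) ** part_mat cl)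
                   ** transpose (part_mat cl) ** A ** part_mat cl - alpha *\<^sub>R mat 1) = mu1 *s w1"
    and w1v1: "w1 \<bullet> v1 = 1"
    and eps_pos: "eps > 0" and eps_le: "mu1 + eps \<le> 0"
    and gamma_pos: "gamma > 0"
    and gamma_le: "\<forall>i j. - gamma * (mat 1 :: real^'r^'r)$i$j
                  \<le> (matrix_inv (transpose (part_mat cl) ** part_mat cl)
                   ** transpose (part_mat cl) ** A ** part_mat cl - alpha *\<^sub>R mat 1)$i$j"
  shows "\<exists>c1 c2. c1 > 0 \<and> c2 > 0 \<and>
    (\<forall>Ar1 Ar2 :: real^'r^'r. \<forall>Br :: real^'m^'r. \<forall>Cr :: real^'r^'p.
      (\<forall>i j. - gamma * (mat 1 :: real^'r^'r)$i$j \<le> Ar1$i$j \<and>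
         Ar1$i$j \<le> ((matrix_inv (transpose (part_mat cl) ** part_mat cl)
                   ** transpose (part_mat cl) ** A ** part_mat cl - alpha *\<^sub>R mat 1)
                   - (mu1 + eps) *\<^sub>R (\<chi> k l. v1$k * w1$l))$i$j) \<longrightarrow>
      (\<forall>i j. - gamma * (mat 1 :: real^'r^'r)$i$j \<le> Ar2$i$j \<and>
         Ar2$i$j \<le> ((matrix_inv (transpose (part_mat cl) ** part_mat cl)
                   ** transpose (part_mat cl) ** A ** part_mat cl - alpha *\<^sub>R mat 1)
                   - (mu1 + eps) *\<^sub>R (\<chi> k l. v1$k * w1$l))$i$j) \<longrightarrow>
      norm (grad_Ar A B C Ar1 Br Cr - grad_Ar A B C Ar2 Br Cr)
        \<le> (c1 + c2 * norm Br * norm Cr) * norm Br * norm Cr * norm (Ar1 - Ar2))"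
proof -
  obtain w where wpos: "\<forall>i. 0 < w$i" and Aw: "\<forall>i. (A *v w)$i < 0"
    using stable_posvec[OF A_stable A_metzler] by blast
  obtain a where a0: "a > 0" and Awa: "\<forall>i. (A *v w)$i \<le> (0 - a) * w$i"
    using margin[of w A 0] wpos Aw by auto
  obtain xmin xmax where xb: "0 < xmin" "\<forall>i. xmin \<le> w$i" "\<forall>i. w$i \<le> xmax"
    using vec_bounds[OF wpos] by blast
  obtain vmin vmax where vb: "0 < vmin" "\<forall>i. vmin \<le> v1$i" "\<forall>i. v1$i \<le> vmax"
    using vec_bounds[OF v1_pos] by blast
  define KA where "KA = real CARD('n) * real CARD('r) * (xmax * vmax) / ((a + eps) * (xmin * vmin))"
  define KL where "KL = real CARD('r) * real CARD('r) * (vmax * vmax) / ((eps + eps) * (vmin * vmin))"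
  define K where "K = max (max KA KL) 1"
  have K0: "0 < K" unfolding K_def by simp
  have mA: "\<forall>i j. i \<noteq> j \<longrightarrow> 0 \<le> A$i$j" using A_metzler unfolding metzler_def by blast
  have Ax: "\<forall>i. (A *v w)$i \<le> - a * w$i" using Awa by simp
  have good: "coer A M K \<and> coer M M K"
    if cond: "\<forall>i j. - gamma * (mat 1 :: real^'r^'r)$i$j \<le> M$i$j \<and>
         M$i$j \<le> ((matrix_inv (transpose (part_mat cl) ** part_mat cl)
                   ** transpose (part_mat cl) ** A ** part_mat cl - alpha *\<^sub>R mat 1)
                   - (mu1 + eps) *\<^sub>R (\<chi> k l. v1$k * w1$l))$i$j" for M :: "real^'r^'r"
  proof -
    have mM: "\<forall>i j. i \<noteq> j \<longrightarrow> 0 \<le> M$i$j" and Mv: "\<forall>i. (M *v v1)$i \<le> - eps * v1$i"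
      using S_props[OF v1_eig w1v1 v1_pos cond] by blast+
    have "coer A M KA" unfolding KA_def
      by (rule coer_metzler[OF mA mM xb(2) xb(3) xb(1) vb(2) vb(3) vb(1) Ax Mv]) (use a0 eps_pos in simp)
    moreover have "coer M M KL" unfolding KL_def
      by (rule coer_metzler[OF mM mM vb(2) vb(3) vb(1) vb(2) vb(3) vb(1) Mv Mv]) (use eps_pos in simp)
    ultimately show ?thesis unfolding K_def by (auto intro: coer_mono)
  qed
  define D where "D = real (card (Basis :: (real^'r^'r) set))"
  define c1 where "c1 = D * real CARD('p) * (2 * K^3 * norm B * norm C) + 1"
  define c2 where "c2 = D * real CARD('p) * (8 * K^3) + 1"
  have D0: "0 \<le> D" unfolding D_def by simp
  have P1: "0 < c1" unfolding c1_def using D0 K0 by (simp add: add_nonneg_pos)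
  have P2: "0 < c2" unfolding c2_def using D0 K0 by (simp add: add_nonneg_pos)
  have P3: "(\<forall>Ar1 Ar2 :: real^'r^'r. \<forall>Br :: real^'m^'r. \<forall>Cr :: real^'r^'p.
      (\<forall>i j. - gamma * (mat 1 :: real^'r^'r)$i$j \<le> Ar1$i$j \<and>
         Ar1$i$j \<le> ((matrix_inv (transpose (part_mat cl) ** part_mat cl)
                   ** transpose (part_mat cl) ** A ** part_mat cl - alpha *\<^sub>R mat 1)
                   - (mu1 + eps) *\<^sub>R (\<chi> k l. v1$k * w1$l))$i$j) \<longrightarrow>
      (\<forall>i j. - gamma * (mat 1 :: real^'r^'r)$i$j \<le> Ar2$i$j \<and>
         Ar2$i$j \<le> ((matrix_inv (transpose (part_mat cl) ** part_mat cl)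
                   ** transpose (part_mat cl) ** A ** part_mat cl - alpha *\<^sub>R mat 1)
                   - (mu1 + eps) *\<^sub>R (\<chi> k l. v1$k * w1$l))$i$j) \<longrightarrow>
      norm (grad_Ar A B C Ar1 Br Cr - grad_Ar A B C Ar2 Br Cr)
        \<le> (c1 + c2 * norm Br * norm Cr) * norm Br * norm Cr * norm (Ar1 - Ar2))"
  proof (intro allI impI)
    fix Ar1 Ar2 :: "real^'r^'r" and Br :: "real^'m^'r" and Cr :: "real^'r^'p"
    assume c1: "\<forall>i j. - gamma * (mat 1 :: real^'r^'r)$i$j \<le> Ar1$i$j \<and>
         Ar1$i$j \<le> ((matrix_inv (transpose (part_mat cl) ** part_mat cl)
                   ** transpose (part_mat cl) ** A ** part_mat cl - alpha *\<^sub>R mat 1)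
                   - (mu1 + eps) *\<^sub>R (\<chi> k l. v1$k * w1$l))$i$j"
      and c2: "\<forall>i j. - gamma * (mat 1 :: real^'r^'r)$i$j \<le> Ar2$i$j \<and>
         Ar2$i$j \<le> ((matrix_inv (transpose (part_mat cl) ** part_mat cl)
                   ** transpose (part_mat cl) ** A ** part_mat cl - alpha *\<^sub>R mat 1)
                   - (mu1 + eps) *\<^sub>R (\<chi> k l. v1$k * w1$l))$i$j"
    have g1: "coer A Ar1 K" "coer Ar1 Ar1 K" using good[OF c1] by auto
    have g2: "coer A Ar2 K" "coer Ar2 Ar2 K" using good[OF c2] by auto
    have G: "norm (grad_Ar A B C Ar1 Br Cr - grad_Ar A B C Ar2 Br Cr)
      \<le> D * (real CARD('p) * (norm Cr * norm Cr * (8 * K^3 * norm (Br ** transpose Br))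
        + norm Cr * (2 * K^3 * norm (B ** transpose Br)) * norm C) * norm (Ar1 - Ar2))"
      unfolding grad_eq[OF g1 K0] grad_eq[OF g2 K0] D_def
      by (rule Gm_lip[OF g1 g2 K0])
    have rp: "norm (Br ** transpose Br) \<le> norm Br * norm Br"
      using norm_mmult[of Br "transpose Br"] by (simp add: norm_transpose)
    have rx: "norm (B ** transpose Br) \<le> norm B * norm Br"
      using norm_mmult[of B "transpose Br"] by (simp add: norm_transpose)
    show "norm (grad_Ar A B C Ar1 Br Cr - grad_Ar A B C Ar2 Br Cr)
        \<le> (c1 + c2 * norm Br * norm Cr) * norm Br * norm Cr * norm (Ar1 - Ar2)"
      unfolding c1_def c2_def
      by (rule final_arith[OF D0 _ less_imp_le[OF K0] norm_ge_zero norm_ge_zero norm_ge_zero norm_ge_zero norm_ge_zero rp rx G]) simp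
  qed
  show ?thesis using P1 P2 P3 by blast
qed

end
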